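(* In the instance constructed below, consider any feasible 2DKR packing (rotations allowed) that contains $2k$ rectangles. Then it does not contain both a horizontally oriented and a vertically oriented rectangle; i.e., either all packed rectangles are vertically oriented or all are horizontally oriented.
   Context: Let $k\ge 9$ be an odd integer and $\mathcal A$ a multiset of $n$ positive integers; let $M=\max_{a\in\mathcal A}a$ and $N=2Mk^4$, $K=[0,N]\times[0,N]$. For each element $a$ of $\mathcal A$ (counted with multiplicity) create two items (rectangles) $R_a$ with width $w(R_a)=N/k+a$ and height $h(R_a)=N/2-a$, and $R'_a$ with width $w(R'_a)=N/k-a$ and height $h(R'_a)=N/2+a$, each of profit $1$. A feasible 2DKR packing places a subset of the items as pairwise disjoint open axis-parallel rectangles inside $K$, each either unrotated or rotated by $90^\circ$. A packed rectangle $i$ is oriented vertically if it is placed unrotated (placed width $w(i)$, placed height $h(i)$, which here satisfies placed height $>$ placed width), and oriented horizontally otherwise. *)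

theory Defs
  imports Complex_Main
begin

text \<open>The multiset A of n positive integers is represented as a list as (with multiplicity,
  n = length as). An item is a pair (i, b) with i < n: b = False is R_a, b = True is R'_a,
  where a = as ! i.\<close>

type_synonym item = "nat \<times> bool"

definition bigN :: "nat \<Rightarrow> nat list \<Rightarrow> real" where
  "bigN k as = 2 * real (Max (set as)) * real k ^ 4"

definition items :: "nat list \<Rightarrow> item set" where
  "items as = {(i, b). i < length as}"

definition item_w :: "nat \<Rightarrow> nat list \<Rightarrow> item \<Rightarrow> real" where
  "item_w k as it = (if snd it then bigN k as / real k - real (as ! fst it)
                     else bigN k as / real k + real (as ! fst it))"

definition item_h :: "nat \<Rightarrow> nat list \<Rightarrow> item \<Rightarrow> real" where
  "item_h k as it = (if snd it then bigN k as / 2 + real (as ! fst it)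
                     else bigN k as / 2 - real (as ! fst it))"

definition placed_w :: "nat \<Rightarrow> nat list \<Rightarrow> (item \<Rightarrow> bool) \<Rightarrow> item \<Rightarrow> real" where
  "placed_w k as rot it = (if rot it then item_h k as it else item_w k as it)"

definition placed_h :: "nat \<Rightarrow> nat list \<Rightarrow> (item \<Rightarrow> bool) \<Rightarrow> item \<Rightarrow> real" where
  "placed_h k as rot it = (if rot it then item_w k as it else item_h k as it)"

definition open_rect ::
  "nat \<Rightarrow> nat list \<Rightarrow> (item \<Rightarrow> real) \<Rightarrow> (item \<Rightarrow> real) \<Rightarrow> (item \<Rightarrow> bool) \<Rightarrow> item \<Rightarrow> (real \<times> real) set" where
  "open_rect k as px py rot it =
     {(u, v). px it < u \<and> u < px it + placed_w k as rot it \<and>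
              py it < v \<and> v < py it + placed_h k as rot it}"

definition feasible_packing ::
  "nat \<Rightarrow> nat list \<Rightarrow> item set \<Rightarrow> (item \<Rightarrow> real) \<Rightarrow> (item \<Rightarrow> real) \<Rightarrow> (item \<Rightarrow> bool) \<Rightarrow> bool" where
  "feasible_packing k as S px py rot \<longleftrightarrow>
     S \<subseteq> items as \<and>
     (\<forall>it\<in>S. 0 \<le> px it \<and> px it + placed_w k as rot it \<le> bigN k as \<and>
              0 \<le> py it \<and> py it + placed_h k as rot it \<le> bigN k as) \<and>
     (\<forall>it\<in>S. \<forall>jt\<in>S. it \<noteq> jt \<longrightarrow> open_rect k as px py rot it \<inter> open_rect k as px py rot jt = {})"

definition vertical :: "(item \<Rightarrow> bool) \<Rightarrow> item \<Rightarrow> bool" where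
  "vertical rot it \<longleftrightarrow> \<not> rot it"

definition horizontal :: "(item \<Rightarrow> bool) \<Rightarrow> item \<Rightarrow> bool" where
  "horizontal rot it \<longleftrightarrow> rot it"

end

theory Submission
  imports Defs
begin

lemma arith_line_int:
  fixes k nb ns K2 K3 K4 :: int
  assumes odd: "odd k" and k9: "k \<ge> 9" and "K2 = k*k" "K3 = k*K2" "K4 = k*K3"
    and nn: "nb \<ge> 0" "ns \<ge> 0"
    and h: "nb * K4 + 2 * (ns * K3) \<le> 2*K4 + 2*nb + 2*ns"
  shows "k*nb + 2*ns \<le> 2*k \<and> (k*nb + 2*ns = 2*k \<and> nb \<ge> 1 \<longrightarrow> ns = 0 \<and> nb \<ge> 2)"
proof -
  have k2: "K2 \<ge> 9*k" using assms by simp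
  have k3: "K3 \<ge> 9*K2" using assms by simp
  have k4: "K4 \<ge> 9*K3" using assms by simp
  have "1 \<le> K3" using k3 k2 k9 by linarith
  hence "ns * 1 \<le> ns * K3" using nn by (intro mult_left_mono) auto
  hence p: "ns * K3 \<ge> ns" by simp
  have nb3: "nb \<le> 2"
  proof (rule ccontr)
    assume "\<not> nb \<le> 2"
    hence "0 \<le> (nb - 3) * (K4 - 2)" using k4 k3 k2 k9 by simp
    hence "0 \<le> nb*K4 - 2*nb - 3*K4 + 6" by (simp add: algebra_simps)
    thus False using h p k4 k3 k2 k9 by linarith
  qed
  have c0: "ns \<le> k" if "nb = 0"
  proof (rule ccontr)
    assume "\<not> ns \<le> k"
    hence "0 \<le> (ns - k - 1) * (2*K3 - 2)" using k4 k3 k2 k9 by simp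
    hence "0 \<le> 2*(ns*K3) - 2*ns - 2*(k*K3) - 2*K3 + 2*k + 2" by (simp add: algebra_simps)
    moreover have "nb*K4 = 0" using that by simp
    ultimately show False using h that k4 k3 k2 k9 assms(5) by linarith
  qed
  have c1: "2*ns + 1 \<le> k" if "nb = 1"
  proof (rule ccontr)
    assume "\<not> 2*ns + 1 \<le> k"
    hence "k + 1 \<le> 2*ns" using odd by presburger
    hence "0 \<le> (2*ns - k - 1) * (K3 - 1)" using k4 k3 k2 k9 by simp
    hence "0 \<le> 2*(ns*K3) - 2*ns - k*K3 - K3 + k + 1" by (simp add: algebra_simps)
    moreover have "nb*K4 = K4" using that by simp
    ultimately show False using h that k4 k3 k2 k9 assms(5) by linarith
  qed
  have c2: "ns = 0" if "nb = 2"
  proof (rule ccontr)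
    assume "ns \<noteq> 0"
    hence "0 \<le> (ns - 1) * (2*K3 - 2)" using nn k4 k3 k2 k9 by simp
    hence "0 \<le> 2*(ns*K3) - 2*ns - 2*K3 + 2" by (simp add: algebra_simps)
    moreover have "nb*K4 = 2*K4" using that by simp
    ultimately show False using h that k4 k3 k2 k9 by linarith
  qed
  show ?thesis
  proof (cases "nb = 0")
    case True thus ?thesis using c0 by simp
  next
    case False
    hence "nb = 1 \<or> nb = 2" using nb3 nn by linarith
    thus ?thesis using c1 c2 by auto
  qed
qed

lemma arith_line:
  fixes k nb ns :: nat
  assumes "odd k" "k \<ge> 9"
    and h: "nb * k^4 + 2 * (ns * k^3) \<le> 2*k^4 + 2*nb + 2*ns"
  shows "k*nb + 2*ns \<le> 2*k \<and> (k*nb + 2*ns = 2*k \<and> nb \<ge> 1 \<longrightarrow> ns = 0 \<and> nb \<ge> 2)"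
proof -
  have h': "int nb * int k^4 + 2 * (int ns * int k^3) \<le> 2*int k^4 + 2*int nb + 2*int ns"
    using h by (metis (mono_tags) of_nat_add of_nat_le_iff of_nat_mult of_nat_numeral of_nat_power)
  define K2 :: int where "K2 = int k * int k"
  define K3 :: int where "K3 = int k * K2"
  define K4 :: int where "K4 = int k * K3"
  have e3: "int k ^ 3 = K3" unfolding K3_def K2_def by (simp add: power3_eq_cube)
  have e4: "int k ^ 4 = K4" unfolding K4_def K3_def K2_def by (simp add: power4_eq_xxxx mult.assoc)
  have "int k * int nb + 2 * int ns \<le> 2 * int k \<and> (int k * int nb + 2 * int ns = 2 * int k \<and> int nb \<ge> 1 \<longrightarrow> int ns = 0 \<and> int nb \<ge> 2)"
    by (rule arith_line_int[OF _ _ K2_def K3_def K4_def _ _ h'[unfolded e3 e4]]) (use assms in auto)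
  then have "int (k*nb+2*ns) \<le> int (2*k) \<and> (int (k*nb+2*ns) = int (2*k) \<and> 1 \<le> nb \<longrightarrow> ns = 0 \<and> 2 \<le> nb)"
    by simp
  thus ?thesis by (simp only: of_nat_le_iff of_nat_eq_iff) auto
qed

lemma double_count:
  fixes w :: "'a \<Rightarrow> nat"
  assumes "finite S" "finite G" "\<forall>i\<in>S. Y i \<subseteq> G"
  shows "(\<Sum>r\<in>G. \<Sum>i\<in>{i\<in>S. r \<in> Y i}. w i) = (\<Sum>i\<in>S. w i * card (Y i))"
proof -
  have "(\<Sum>r\<in>G. \<Sum>i\<in>{i\<in>S. r \<in> Y i}. w i) = (\<Sum>r\<in>G. \<Sum>i\<in>S. if r \<in> Y i then w i else 0)"
    using assms(1) by (simp add: sum.inter_filter)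
  also have "\<dots> = (\<Sum>i\<in>S. \<Sum>r\<in>G. if r \<in> Y i then w i else 0)" by (rule sum.swap)
  also have "\<dots> = (\<Sum>i\<in>S. w i * card (Y i))"
  proof (rule sum.cong[OF refl])
    fix i assume "i \<in> S"
    hence "G \<inter> Y i = Y i" using assms(3) by blast
    thus "(\<Sum>r\<in>G. if r \<in> Y i then w i else 0) = w i * card (Y i)"
      using assms(2) by (simp add: sum.If_cases)
  qed
  finally show ?thesis .
qed


lemma grid_count:
  fixes x y :: real and L :: nat
  assumes "0 \<le> x" "x + y \<le> real L"
  shows "y - 1 \<le> real (card {j\<in>{0..<L}. x < real j \<and> real j < x + y})"
proof -
  define m0 where "m0 = nat (\<lfloor>x\<rfloor> + 1)"
  define m1 where "m1 = nat (\<lceil>x + y\<rceil>)"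
  have sub: "{m0..<m1} \<subseteq> {j\<in>{0..<L}. x < real j \<and> real j < x + y}"
  proof
    fix j assume j: "j \<in> {m0..<m1}"
    have "\<lfloor>x\<rfloor> + 1 \<le> int j" using j assms(1) unfolding m0_def by auto
    hence "real_of_int (\<lfloor>x\<rfloor> + 1) \<le> real j" by linarith
    hence hx: "x < real j" by linarith
    have jc: "int j < \<lceil>x + y\<rceil>" using j unfolding m1_def by auto
    hence "real_of_int (int j) < x + y" by (simp only: less_ceiling_iff)
    moreover have "\<lceil>x + y\<rceil> \<le> int L" using assms(2)
      by (simp add: ceiling_le_iff)
    hence "j < L" using jc by linarith
    ultimately show "j \<in> {j\<in>{0..<L}. x < real j \<and> real j < x + y}" using hx by simp
  qed
  have "card {m0..<m1} \<le> card {j\<in>{0..<L}. x < real j \<and> real j < x + y}"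
    by (rule card_mono[OF _ sub]) simp
  moreover have "y - 1 \<le> real (card {m0..<m1})"
  proof (cases "m0 \<le> m1")
    case True
    have "real (card {m0..<m1}) = real m1 - real m0" using True by simp
    moreover have "real m0 \<le> x + 1"
      proof -
      have "\<lfloor>x\<rfloor> + 1 \<ge> 0" using assms(1) by simp
      hence "real m0 = real_of_int (\<lfloor>x\<rfloor> + 1)" unfolding m0_def by simp
      thus ?thesis unfolding m1_def m0_def by linarith
    qed
    moreover have "x + y \<le> real m1"
      proof -
      have "real_of_int \<lceil>x + y\<rceil> \<le> real (nat \<lceil>x + y\<rceil>)" by (cases "\<lceil>x + y\<rceil> \<ge> 0") auto
      thus ?thesis unfolding m1_def m0_def by linarith
    qed
    ultimately show ?thesis by linarith
  next
    case False
    have "real m0 \<le> x + 1"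
      proof -
      have "\<lfloor>x\<rfloor> + 1 \<ge> 0" using assms(1) by simp
      hence "real m0 = real_of_int (\<lfloor>x\<rfloor> + 1)" unfolding m0_def by simp
      thus ?thesis unfolding m1_def m0_def by linarith
    qed
    moreover have "x + y \<le> real m1"
      proof -
      have "real_of_int \<lceil>x + y\<rceil> \<le> real (nat \<lceil>x + y\<rceil>)" by (cases "\<lceil>x + y\<rceil> \<ge> 0") auto
      thus ?thesis unfolding m1_def m0_def by linarith
    qed
    ultimately show ?thesis using False by simp
  qed
  ultimately show ?thesis by linarith
qed


lemma line_bound:
  fixes T :: "'a set" and Z :: "'a \<Rightarrow> nat set" and big :: "'a \<Rightarrow> bool" and k :: nat
  assumes fin: "finite T" and k: "odd k" "k \<ge> 9"
    and sub: "\<forall>i\<in>T. Z i \<subseteq> {0..<2*k^4}"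
    and dis: "\<forall>i\<in>T. \<forall>j\<in>T. i \<noteq> j \<longrightarrow> Z i \<inter> Z j = {}"
    and cb: "\<forall>i\<in>T. big i \<longrightarrow> k^4 \<le> card (Z i) + 2"
    and cs: "\<forall>i\<in>T. \<not> big i \<longrightarrow> 2*k^3 \<le> card (Z i) + 2"
  shows "(\<Sum>i\<in>T. if big i then k else 2) \<le> 2*k \<and>
         ((\<Sum>i\<in>T. if big i then k else 2) = 2*k \<and> (\<exists>i\<in>T. big i) \<longrightarrow>
            (\<forall>i\<in>T. big i) \<and> 2 \<le> card {i\<in>T. big i})"
proof -
  define Bs where "Bs = {i\<in>T. big i}"
  define Ss where "Ss = {i\<in>T. \<not> big i}"
  have fB: "finite Bs" and fS: "finite Ss" using fin by (auto simp: Bs_def Ss_def)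
  have TU: "T = Bs \<union> Ss" and BSd: "Bs \<inter> Ss = {}" by (auto simp: Bs_def Ss_def)
  have sumeq: "(\<Sum>i\<in>T. if big i then k else 2) = k * card Bs + 2 * card Ss"
  proof -
    have "(\<Sum>i\<in>T. if big i then k else 2) = (\<Sum>i\<in>Bs. if big i then k else 2) + (\<Sum>i\<in>Ss. if big i then k else 2)"
      unfolding TU by (rule sum.union_disjoint[OF fB fS BSd])
    also have "(\<Sum>i\<in>Bs. if big i then k else 2) = (\<Sum>i\<in>Bs. k)" by (rule sum.cong) (auto simp: Bs_def)
    also have "(\<Sum>i\<in>Ss. if big i then k else 2) = (\<Sum>i\<in>Ss. 2)" by (rule sum.cong) (auto simp: Ss_def)
    finally show ?thesis by simp
  qed
  have finZ: "\<forall>i\<in>T. finite (Z i)" using sub by (meson finite_atLeastLessThan finite_subset)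
  have "card (\<Union>i\<in>T. Z i) = (\<Sum>i\<in>T. card (Z i))"
    by (rule card_UN_disjoint[OF fin]) (use finZ dis in auto)
  moreover have "card (\<Union>i\<in>T. Z i) \<le> 2*k^4"
  proof -
    have "(\<Union>i\<in>T. Z i) \<subseteq> {0..<2*k^4}" using sub by blast
    hence "card (\<Union>i\<in>T. Z i) \<le> card {0..<2*k^4}" by (intro card_mono) auto
    thus ?thesis by simp
  qed
  ultimately have tot: "(\<Sum>i\<in>T. card (Z i)) \<le> 2*k^4" by simp
  have "(\<Sum>i\<in>T. card (Z i)) = (\<Sum>i\<in>Bs. card (Z i)) + (\<Sum>i\<in>Ss. card (Z i))"
    unfolding TU by (rule sum.union_disjoint[OF fB fS BSd])
  moreover have "card Bs * k^4 \<le> (\<Sum>i\<in>Bs. card (Z i) + 2)"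
  proof -
    have "(of_nat (card Bs) :: nat) * k^4 \<le> (\<Sum>i\<in>Bs. card (Z i) + 2)"
      by (rule sum_bounded_below) (use cb in \<open>auto simp: Bs_def\<close>)
    thus ?thesis by simp
  qed
  moreover have "card Ss * (2*k^3) \<le> (\<Sum>i\<in>Ss. card (Z i) + 2)"
  proof -
    have "(of_nat (card Ss) :: nat) * (2*k^3) \<le> (\<Sum>i\<in>Ss. card (Z i) + 2)"
      by (rule sum_bounded_below) (use cs in \<open>auto simp: Ss_def\<close>)
    thus ?thesis by simp
  qed
  moreover have "(\<Sum>i\<in>Bs. card (Z i) + 2) = (\<Sum>i\<in>Bs. card (Z i)) + 2 * card Bs"
    by (simp only: sum.distrib) simp
  moreover have "(\<Sum>i\<in>Ss. card (Z i) + 2) = (\<Sum>i\<in>Ss. card (Z i)) + 2 * card Ss"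
    by (simp only: sum.distrib) simp
  ultimately have "card Bs * k^4 + 2 * (card Ss * k^3) \<le> 2*k^4 + 2 * card Bs + 2 * card Ss"
    using tot by (simp add: algebra_simps)
  from arith_line[OF k this]
  have A: "k * card Bs + 2 * card Ss \<le> 2 * k \<and>
    (k * card Bs + 2 * card Ss = 2 * k \<and> 1 \<le> card Bs \<longrightarrow> card Ss = 0 \<and> 2 \<le> card Bs)" .
  show ?thesis
  proof (intro conjI impI)
    show "(\<Sum>i\<in>T. if big i then k else 2) \<le> 2*k" using A sumeq by simp
  next
    assume h: "(\<Sum>i\<in>T. if big i then k else 2) = 2*k \<and> (\<exists>i\<in>T. big i)"
    hence "Bs \<noteq> {}" by (auto simp: Bs_def)
    hence "1 \<le> card Bs" using fB by (simp add: Suc_le_eq card_gt_0_iff)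
    hence "card Ss = 0 \<and> 2 \<le> card Bs" using A h sumeq by simp
    thus "\<forall>i\<in>T. big i" using fS by (auto simp: Ss_def)
    show "2 \<le> card {i\<in>T. big i}" using \<open>card Ss = 0 \<and> 2 \<le> card Bs\<close> by (simp add: Bs_def)
  qed
qed


theorem mainTheorem11:
  fixes k :: nat and as :: "nat list"
    and S :: "item set" and px py :: "item \<Rightarrow> real" and rot :: "item \<Rightarrow> bool"
  assumes "odd k" and "k \<ge> 9"
    and "\<forall>a\<in>set as. a > 0"
    and "feasible_packing k as S px py rot"
    and "card S = 2 * k"
  shows "(\<forall>it\<in>S. vertical rot it) \<or> (\<forall>it\<in>S. horizontal rot it)"
proof (rule ccontr)
  assume "\<not> ?thesis"
  then obtain V0 H0 where V0: "V0 \<in> S" "\<not> rot V0" and H0: "H0 \<in> S" "rot H0"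
    by (auto simp: vertical_def horizontal_def)
  have k9: "k \<ge> 9" and kodd: "odd k" using assms by auto
  have finS: "finite S" using assms(5) k9 by (metis card.infinite mult_is_0 not_numeral_le_zero zero_neq_numeral le_zero_eq)
  have Ssub: "S \<subseteq> items as"
    and bnd: "\<forall>it\<in>S. 0 \<le> px it \<and> px it + placed_w k as rot it \<le> bigN k as \<and>
              0 \<le> py it \<and> py it + placed_h k as rot it \<le> bigN k as"
    and disj: "\<forall>it\<in>S. \<forall>jt\<in>S. it \<noteq> jt \<longrightarrow> open_rect k as px py rot it \<inter> open_rect k as px py rot jt = {}"
    using assms(4) unfolding feasible_packing_def by auto
  define Mn where "Mn = Max (set as)"
  define M where "M = real Mn"
  have inset: "as ! fst it \<in> set as" if "it \<in> S" for it
    using that Ssub by (auto simp: items_def)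
  have aleM: "real (as ! fst it) \<le> M" if "it \<in> S" for it
    using inset[OF that] unfolding M_def Mn_def by simp
  have Mpos: "M > 0"
  proof -
    have "as ! fst V0 > 0" using inset[OF V0(1)] assms(3) by auto
    thus ?thesis using aleM[OF V0(1)] by linarith
  qed
  have N: "bigN k as = 2 * M * real k ^ 4" unfolding bigN_def M_def Mn_def by simp
  define K3 where "K3 = real k ^ 3"
  define K4 where "K4 = real k ^ 4"
  have K43: "K4 = real k * K3" unfolding K3_def K4_def by (simp add: power_eq_if)
  have kpos: "real k > 0" using k9 by simp
  define s where "s it = (if snd it then - real (as ! fst it) / M else real (as ! fst it) / M)" for it
  have s_bd: "-1 \<le> s it \<and> s it \<le> 1" if "it \<in> S" for it
  proof -
    have "0 \<le> real (as ! fst it) / M" "real (as ! fst it) / M \<le> 1"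
      using aleM[OF that] Mpos by (auto simp: divide_le_eq_1)
    thus ?thesis unfolding s_def by auto
  qed
  have wM: "item_w k as it / M = 2 * K3 + s it" for it
  proof -
    have "item_w k as it = 2 * M * K3 + (if snd it then - real (as ! fst it) else real (as ! fst it))"
      unfolding item_w_def N K3_def using kpos by (auto simp: power_eq_if)
    thus ?thesis unfolding s_def using Mpos by (auto simp: field_simps)
  qed
  have hM: "item_h k as it / M = K4 - s it" for it
  proof -
    have "item_h k as it = M * K4 - (if snd it then - real (as ! fst it) else real (as ! fst it))"
      unfolding item_h_def N K4_def by auto
    thus ?thesis unfolding s_def using Mpos by (auto simp: field_simps)
  qed
  define L where "L = 2 * k ^ 4"
  define G where "G = {0..<L}"
  define Xs where "Xs it = {j\<in>{0..<L}. px it / M < real j \<and> real j < px it / M + placed_w k as rot it / M}" for it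
  define Ys where "Ys it = {j\<in>{0..<L}. py it / M < real j \<and> real j < py it / M + placed_h k as rot it / M}" for it
  have NM: "bigN k as / M = real L" unfolding N L_def using Mpos by simp
  have cX: "placed_w k as rot it / M - 1 \<le> real (card (Xs it))" if "it \<in> S" for it
    unfolding Xs_def
  proof (rule grid_count)
    show "0 \<le> px it / M" using bnd that Mpos by auto
    have "(px it + placed_w k as rot it) / M \<le> bigN k as / M"
      using bnd that Mpos by (auto simp: divide_right_mono)
    thus "px it / M + placed_w k as rot it / M \<le> real L" using NM by (simp add: add_divide_distrib)
  qed
  have cY: "placed_h k as rot it / M - 1 \<le> real (card (Ys it))" if "it \<in> S" for it
    unfolding Ys_def
  proof (rule grid_count)
    show "0 \<le> py it / M" using bnd that Mpos by auto
    have "(py it + placed_h k as rot it) / M \<le> bigN k as / M"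
      using bnd that Mpos by (auto simp: divide_right_mono)
    thus "py it / M + placed_h k as rot it / M \<le> real L" using NM by (simp add: add_divide_distrib)
  qed
  have K3ge: "K3 \<ge> 9 * real k^2" and K2ge: "real k^2 \<ge> 9 * real k"
    unfolding K3_def using k9 by (auto simp: power_eq_if)
  have rowbig: "k^4 \<le> card (Xs it) + 2" if "it \<in> S" "rot it" for it
  proof -
    have "K4 - s it - 1 \<le> real (card (Xs it))"
      using cX[OF that(1)] hM[of it] that(2) by (simp add: placed_w_def)
    hence "real (k^4) \<le> real (card (Xs it) + 2)" using s_bd[OF that(1)] unfolding K4_def by simp
    thus ?thesis by linarith
  qed
  have rowsmall: "2 * k^3 \<le> card (Xs it) + 2" if "it \<in> S" "\<not> rot it" for it
  proof -
    have "2 * K3 + s it - 1 \<le> real (card (Xs it))"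
      using cX[OF that(1)] wM[of it] that(2) by (simp add: placed_w_def)
    hence "real (2 * k^3) \<le> real (card (Xs it) + 2)" using s_bd[OF that(1)] unfolding K3_def by simp
    thus ?thesis by linarith
  qed
  have colbig: "k^4 \<le> card (Ys it) + 2" if "it \<in> S" "\<not> rot it" for it
  proof -
    have "K4 - s it - 1 \<le> real (card (Ys it))"
      using cY[OF that(1)] hM[of it] that(2) by (simp add: placed_h_def)
    hence "real (k^4) \<le> real (card (Ys it) + 2)" using s_bd[OF that(1)] unfolding K4_def by simp
    thus ?thesis by linarith
  qed
  have colsmall: "2 * k^3 \<le> card (Ys it) + 2" if "it \<in> S" "rot it" for it
  proof -
    have "2 * K3 + s it - 1 \<le> real (card (Ys it))"
      using cY[OF that(1)] wM[of it] that(2) by (simp add: placed_h_def)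
    hence "real (2 * k^3) \<le> real (card (Ys it) + 2)" using s_bd[OF that(1)] unfolding K3_def by simp
    thus ?thesis by linarith
  qed
  define wt where "wt it = (if rot it then k else 2) * card (Ys it) + (if \<not> rot it then k else 2) * card (Xs it)" for it
  have wtb: "4 * k^4 \<le> wt it + (2 * k + 4)" if "it \<in> S" for it
  proof (cases "rot it")
    case True
    have a: "2 * K3 + s it - 1 \<le> real (card (Ys it))"
      using cY[OF that] wM[of it] True by (simp add: placed_h_def)
    have b: "K4 - s it - 1 \<le> real (card (Xs it))"
      using cX[OF that] hM[of it] True by (simp add: placed_w_def)
    have "real k * (2 * K3 + s it - 1) \<le> real k * real (card (Ys it))"
      using a by (intro mult_left_mono) auto
    moreover have "real k * (2 * K3 + s it - 1) = 2 * K4 + real k * s it - real k" using K43 by (simp add: algebra_simps)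
    moreover have "real k * s it \<ge> - real k" using s_bd[OF that] kpos
      by (metis mult.right_neutral mult_le_cancel_left_pos mult_minus_right)
    ultimately have "real (4 * k^4) \<le> real (wt it + (2 * k + 4))"
      using b s_bd[OF that] True unfolding wt_def K4_def by simp
    thus ?thesis by linarith
  next
    case False
    have a: "2 * K3 + s it - 1 \<le> real (card (Xs it))"
      using cX[OF that] wM[of it] False by (simp add: placed_w_def)
    have b: "K4 - s it - 1 \<le> real (card (Ys it))"
      using cY[OF that] hM[of it] False by (simp add: placed_h_def)
    have "real k * (2 * K3 + s it - 1) \<le> real k * real (card (Xs it))"
      using a by (intro mult_left_mono) auto
    moreover have "real k * (2 * K3 + s it - 1) = 2 * K4 + real k * s it - real k" using K43 by (simp add: algebra_simps)
    moreover have "real k * s it \<ge> - real k" using s_bd[OF that] kpos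
      by (metis mult.right_neutral mult_le_cancel_left_pos mult_minus_right)
    ultimately have "real (4 * k^4) \<le> real (wt it + (2 * k + 4))"
      using b s_bd[OF that] False unfolding wt_def K4_def by simp
    thus ?thesis by linarith
  qed
  have grid_disj: "False" if "i \<in> S" "j \<in> S" "i \<noteq> j" "c \<in> Xs i" "c \<in> Xs j" "r \<in> Ys i" "r \<in> Ys j" for i j c r
  proof -
    have mem: "(real c * M, real r * M) \<in> open_rect k as px py rot t" if "c \<in> Xs t" "r \<in> Ys t" for t
    proof -
      have "px t / M < real c" "real c < px t / M + placed_w k as rot t / M"
           "py t / M < real r" "real r < py t / M + placed_h k as rot t / M"
        using that unfolding Xs_def Ys_def by auto
      hence "px t < real c * M" "real c * M < px t + placed_w k as rot t"
            "py t < real r * M" "real r * M < py t + placed_h k as rot t"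
        using Mpos by (auto simp: field_simps)
      thus ?thesis unfolding open_rect_def by simp
    qed
    show False using disj that mem[of i] mem[of j] by blast
  qed
  have XsG: "Xs it \<subseteq> {0..<2*k^4}" for it unfolding Xs_def L_def by auto
  have YsG: "Ys it \<subseteq> {0..<2*k^4}" for it unfolding Ys_def L_def by auto
  have finX: "finite (Xs it)" for it using XsG[of it] finite_subset by blast
  define rowF where "rowF r = (\<Sum>i\<in>{i\<in>S. r \<in> Ys i}. if rot i then k else 2)" for r
  define colF where "colF c = (\<Sum>i\<in>{i\<in>S. c \<in> Xs i}. if \<not> rot i then k else 2)" for c
  have rowL: "rowF r \<le> 2*k \<and> (rowF r = 2*k \<and> (\<exists>i\<in>{i\<in>S. r \<in> Ys i}. rot i) \<longrightarrow>
            (\<forall>i\<in>{i\<in>S. r \<in> Ys i}. rot i) \<and> 2 \<le> card {i\<in>{i\<in>S. r \<in> Ys i}. rot i})" for r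
    unfolding rowF_def
  proof (rule line_bound[OF _ kodd k9])
    show "finite {i\<in>S. r \<in> Ys i}" using finS by simp
    show "\<forall>i\<in>{i\<in>S. r \<in> Ys i}. Xs i \<subseteq> {0..<2*k^4}" using XsG by auto
    show "\<forall>i\<in>{i\<in>S. r \<in> Ys i}. \<forall>j\<in>{i\<in>S. r \<in> Ys i}. i \<noteq> j \<longrightarrow> Xs i \<inter> Xs j = {}"
      using grid_disj by blast
    show "\<forall>i\<in>{i\<in>S. r \<in> Ys i}. rot i \<longrightarrow> k^4 \<le> card (Xs i) + 2" using rowbig by auto
    show "\<forall>i\<in>{i\<in>S. r \<in> Ys i}. \<not> rot i \<longrightarrow> 2*k^3 \<le> card (Xs i) + 2" using rowsmall by auto
  qed
  have colL: "colF c \<le> 2*k \<and> (colF c = 2*k \<and> (\<exists>i\<in>{i\<in>S. c \<in> Xs i}. \<not> rot i) \<longrightarrow>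
            (\<forall>i\<in>{i\<in>S. c \<in> Xs i}. \<not> rot i) \<and> 2 \<le> card {i\<in>{i\<in>S. c \<in> Xs i}. \<not> rot i})" for c
    unfolding colF_def
  proof (rule line_bound[OF _ kodd k9])
    show "finite {i\<in>S. c \<in> Xs i}" using finS by simp
    show "\<forall>i\<in>{i\<in>S. c \<in> Xs i}. Ys i \<subseteq> {0..<2*k^4}" using YsG by auto
    show "\<forall>i\<in>{i\<in>S. c \<in> Xs i}. \<forall>j\<in>{i\<in>S. c \<in> Xs i}. i \<noteq> j \<longrightarrow> Ys i \<inter> Ys j = {}"
      using grid_disj by blast
    show "\<forall>i\<in>{i\<in>S. c \<in> Xs i}. \<not> rot i \<longrightarrow> k^4 \<le> card (Ys i) + 2" using colbig by auto
    show "\<forall>i\<in>{i\<in>S. c \<in> Xs i}. \<not> \<not> rot i \<longrightarrow> 2*k^3 \<le> card (Ys i) + 2" using colsmall by auto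
  qed
  have sumR: "(\<Sum>r\<in>G. rowF r) = (\<Sum>i\<in>S. (if rot i then k else 2) * card (Ys i))"
    unfolding rowF_def by (rule double_count[OF finS]) (use YsG in \<open>auto simp: G_def L_def\<close>)
  have sumC: "(\<Sum>c\<in>G. colF c) = (\<Sum>i\<in>S. (if \<not> rot i then k else 2) * card (Xs i))"
    unfolding colF_def by (rule double_count[OF finS]) (use XsG in \<open>auto simp: G_def L_def\<close>)
  have sumW: "(\<Sum>r\<in>G. rowF r) + (\<Sum>c\<in>G. colF c) = (\<Sum>i\<in>S. wt i)"
    unfolding sumR sumC wt_def by (simp add: sum.distrib)
  have lowW: "card S * (4 * k^4) \<le> (\<Sum>i\<in>S. wt i + (2 * k + 4))"
  proof -
    have "(of_nat (card S) :: nat) * (4 * k^4) \<le> (\<Sum>i\<in>S. wt i + (2 * k + 4))"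
      by (rule sum_bounded_below) (use wtb in auto)
    thus ?thesis by simp
  qed
  have lowW2: "8 * k^5 \<le> (\<Sum>i\<in>S. wt i) + 2*k*(2*k+4)"
  proof -
    have "(\<Sum>i\<in>S. wt i + (2 * k + 4)) = (\<Sum>i\<in>S. wt i) + card S * (2*k+4)" by (simp add: sum.distrib)
    moreover have "card S * (4 * k^4) = 8 * k^5" using assms(5) by (simp add: power_eq_if)
    ultimately show ?thesis using lowW assms(5) by simp
  qed
  define BR where "BR = {r\<in>G. rowF r < 2*k}"
  define BC where "BC = {c\<in>G. colF c < 2*k}"
  have finG: "finite G" unfolding G_def by simp
  have "BR \<subseteq> G" "BC \<subseteq> G" unfolding BR_def BC_def by auto
  have cardG: "card G = 2 * k^4" unfolding G_def L_def by simp
  have upR: "(\<Sum>r\<in>G. rowF r) + card BR \<le> 2*k * card G"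
  proof -
    have "(\<Sum>r\<in>G. rowF r + (if r \<in> BR then 1 else 0)) \<le> (\<Sum>r\<in>G. 2*k)"
      by (rule sum_mono) (use rowL in \<open>auto simp: BR_def\<close>)
    moreover have "(\<Sum>r\<in>G. (if r \<in> BR then 1 else 0)::nat) = card BR"
      using finG \<open>BR \<subseteq> G\<close> by (simp add: sum.If_cases Int_absorb1 Int_absorb2)
    ultimately show ?thesis by (simp add: sum.distrib mult.commute)
  qed
  have upC: "(\<Sum>c\<in>G. colF c) + card BC \<le> 2*k * card G"
  proof -
    have "(\<Sum>c\<in>G. colF c + (if c \<in> BC then 1 else 0)) \<le> (\<Sum>c\<in>G. 2*k)"
      by (rule sum_mono) (use colL in \<open>auto simp: BC_def\<close>)
    moreover have "(\<Sum>c\<in>G. (if c \<in> BC then 1 else 0)::nat) = card BC"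
      using finG \<open>BC \<subseteq> G\<close> by (simp add: sum.If_cases Int_absorb1 Int_absorb2)
    ultimately show ?thesis by (simp add: sum.distrib mult.commute)
  qed
  have k5: "2*k * card G = 4 * k^5" unfolding cardG by (simp add: power_eq_if)
  have badb: "card BR + card BC \<le> 4*k*k + 8*k"
    using upR upC lowW2 sumW k5 by (simp add: algebra_simps)
  have k3b: "4*k*k + 8*k + 6 < 2 * k^3"
  proof -
    have "k^3 = k * (k * k)" by (simp add: power3_eq_cube)
    moreover have "9 * (k*k) \<le> k * (k*k)" using k9 by (intro mult_le_mono1)
    moreover have "9 * k \<le> k * k" using k9 by (intro mult_le_mono1)
    ultimately show ?thesis using k9 by linarith
  qed
  have "\<not> Ys H0 \<subseteq> BR"
  proof
    assume "Ys H0 \<subseteq> BR"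
    hence "card (Ys H0) \<le> card BR" using finG by (intro card_mono) (auto simp: BR_def)
    thus False using colsmall[OF H0] badb k3b by linarith
  qed
  then obtain r where r: "r \<in> Ys H0" "r \<notin> BR" by blast
  have rG: "r \<in> G" using r(1) YsG[of H0] unfolding G_def L_def by auto
  have "rowF r = 2*k" using rowL[of r] r rG unfolding BR_def by auto
  hence allrot: "(\<forall>i\<in>{i\<in>S. r \<in> Ys i}. rot i) \<and> 2 \<le> card {i\<in>{i\<in>S. r \<in> Ys i}. rot i}"
  proof -
    have ex: "\<exists>i\<in>{i\<in>S. r \<in> Ys i}. rot i" using H0 r by blast
    show ?thesis using conjunct2[OF rowL[of r]] ex \<open>rowF r = 2*k\<close> by blast
  qed
  then obtain A B where AB: "A \<in> S" "B \<in> S" "A \<noteq> B" "r \<in> Ys A" "r \<in> Ys B" "rot A" "rot B"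
  proof -
    define T where "T = {i\<in>{i\<in>S. r \<in> Ys i}. rot i}"
    have "2 \<le> card T" using allrot T_def by simp
    then obtain A where "A \<in> T" by (metis all_not_in_conv card.empty not_numeral_le_zero)
    have "finite T" using finS T_def by simp
    have "card (T - {A}) \<ge> 1" using \<open>2 \<le> card T\<close> \<open>A \<in> T\<close> \<open>finite T\<close> by simp
    then obtain B where "B \<in> T - {A}" by (metis all_not_in_conv card.empty not_one_le_zero)
    hence b: "B \<in> S" "r \<in> Ys B" "rot B" "A \<noteq> B" using T_def by auto
    have a: "A \<in> S" "r \<in> Ys A" "rot A" using \<open>A \<in> T\<close> T_def by auto
    show ?thesis using that a b by blast
  qed
  have XAB: "Xs A \<inter> Xs B = {}" using grid_disj[of A B] AB by blast
  have sub2: "Xs V0 \<inter> (Xs A \<union> Xs B) \<subseteq> BC"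
  proof
    fix c assume c: "c \<in> Xs V0 \<inter> (Xs A \<union> Xs B)"
    have cG: "c \<in> G" using c XsG[of V0] unfolding G_def L_def by auto
    have "colF c \<noteq> 2*k"
    proof
      assume "colF c = 2*k"
      moreover have "\<exists>i\<in>{i\<in>S. c \<in> Xs i}. \<not> rot i" using V0 c by blast
      ultimately have "\<forall>i\<in>{i\<in>S. c \<in> Xs i}. \<not> rot i" using conjunct2[OF colL[of c]] by blast
      thus False using c AB by blast
    qed
    thus "c \<in> BC" using colL[of c] cG unfolding BC_def by auto
  qed
  have "card (Xs V0) \<le> card (Xs V0 \<inter> (Xs A \<union> Xs B)) + card (G - (Xs A \<union> Xs B))"
  proof -
    have "Xs V0 \<subseteq> (Xs V0 \<inter> (Xs A \<union> Xs B)) \<union> (G - (Xs A \<union> Xs B))"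
      using XsG[of V0] unfolding G_def L_def by auto
    hence "card (Xs V0) \<le> card ((Xs V0 \<inter> (Xs A \<union> Xs B)) \<union> (G - (Xs A \<union> Xs B)))"
      using finG finX[of V0] by (intro card_mono) auto
    also have "\<dots> \<le> card (Xs V0 \<inter> (Xs A \<union> Xs B)) + card (G - (Xs A \<union> Xs B))" by (rule card_Un_le)
    finally show ?thesis .
  qed
  moreover have "card (G - (Xs A \<union> Xs B)) + card (Xs A) + card (Xs B) = card G"
  proof -
    have fa: "finite (Xs A)" "finite (Xs B)" using XsG finite_subset by (metis finite_atLeastLessThan)+
    have "Xs A \<union> Xs B \<subseteq> G" using XsG[of A] XsG[of B] unfolding G_def L_def by auto
    hence "card (G - (Xs A \<union> Xs B)) = card G - card (Xs A \<union> Xs B)"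
      using finG by (simp add: card_Diff_subset fa)
    moreover have "card (Xs A \<union> Xs B) = card (Xs A) + card (Xs B)" using XAB fa by (simp add: card_Un_disjoint)
    moreover have "card (Xs A \<union> Xs B) \<le> card G" using \<open>Xs A \<union> Xs B \<subseteq> G\<close> finG by (intro card_mono)
    ultimately show ?thesis by linarith
  qed
  moreover have "card (Xs V0 \<inter> (Xs A \<union> Xs B)) \<le> card BC"
    using sub2 finG by (intro card_mono) (auto simp: BC_def)
  moreover have "k^4 \<le> card (Xs A) + 2" "k^4 \<le> card (Xs B) + 2" using rowbig AB by auto
  moreover have "2 * k^3 \<le> card (Xs V0) + 2" using rowsmall V0 by auto
  ultimately show False using cardG badb k3b by linarith
qed


end
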